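(* (i) Let $X$ be a real normed linear space and $\varepsilon\in[0,2)$. Then $X$ is $\varepsilon$-smooth if and only if each two-dimensional subspace of $X$ is $\varepsilon$-smooth. (ii) Let $X$ be a real normed linear space. If $X$ is approximately smooth, then each two-dimensional subspace of $X$ is approximately smooth. Moreover, if $X$ is finite-dimensional and each of its two-dimensional subspaces is approximately smooth, then $X$ is approximately smooth.
   Context: For a normed space $Z$ and $z\in Z\setminus\{\theta\}$, $J(z)=\{f\in S_{Z^*}: f(z)=\|z\|\}$; $z$ is $\varepsilon$-smooth if $\operatorname{diam}J(z)=\sup_{f,g\in J(z)}\|f-g\|\le\varepsilon$. The space $Z$ is $\varepsilon$-smooth ($\varepsilon\in[0,2)$) if every $z\in S_Z$ is $\varepsilon$-smooth, and $Z$ is approximately smooth if it is $\varepsilon$-smooth for some $\varepsilon\in[0,2)$. Subspaces carry the restricted norm. *)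

theory Defs
  imports "HOL-Analysis.Analysis"
begin

text \<open>A subspace Y of a real normed space carries the restricted norm.
  Its dual Y* is modelled by real-valued functions that are linear and bounded on Y
  (only their values on Y matter).\<close>

definition is_functional_on :: "'a::real_normed_vector set \<Rightarrow> ('a \<Rightarrow> real) \<Rightarrow> bool" where
  "is_functional_on Y f \<longleftrightarrow>
     (\<forall>x\<in>Y. \<forall>y\<in>Y. \<forall>a b::real. f (a *\<^sub>R x + b *\<^sub>R y) = a * f x + b * f y) \<and>
     (\<exists>B. \<forall>y\<in>Y. \<bar>f y\<bar> \<le> B * norm y)"

definition dual_norm_on :: "'a::real_normed_vector set \<Rightarrow> ('a \<Rightarrow> real) \<Rightarrow> real" where
  "dual_norm_on Y f = (SUP y\<in>{y\<in>Y. norm y \<le> 1}. \<bar>f y\<bar>)"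

definition Jset :: "'a::real_normed_vector set \<Rightarrow> 'a \<Rightarrow> ('a \<Rightarrow> real) set" where
  "Jset Y z = {f. is_functional_on Y f \<and> dual_norm_on Y f = 1 \<and> f z = norm z}"

definition diam_J :: "'a::real_normed_vector set \<Rightarrow> 'a \<Rightarrow> real" where
  "diam_J Y z = (SUP p\<in>Jset Y z \<times> Jset Y z. dual_norm_on Y (\<lambda>x. fst p x - snd p x))"

definition eps_smooth_point :: "'a::real_normed_vector set \<Rightarrow> real \<Rightarrow> 'a \<Rightarrow> bool" where
  "eps_smooth_point Y \<epsilon> z \<longleftrightarrow> diam_J Y z \<le> \<epsilon>"

definition eps_smooth :: "'a::real_normed_vector set \<Rightarrow> real \<Rightarrow> bool" where
  "eps_smooth Y \<epsilon> \<longleftrightarrow> (\<forall>z\<in>Y. norm z = 1 \<longrightarrow> eps_smooth_point Y \<epsilon> z)"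

definition approx_smooth :: "'a::real_normed_vector set \<Rightarrow> bool" where
  "approx_smooth Y \<longleftrightarrow> (\<exists>\<epsilon>. 0 \<le> \<epsilon> \<and> \<epsilon> < 2 \<and> eps_smooth Y \<epsilon>)"

end

theory Submission
  imports Defs
begin

definition vgraph :: "'a::real_normed_vector set \<Rightarrow> ('a\<Rightarrow>real) \<Rightarrow> ('a\<times>real) set \<Rightarrow> bool" where
 "vgraph Y f G \<longleftrightarrow> (\<forall>y\<in>Y. (y, f y) \<in> G) \<and>
   (\<forall>p\<in>G. \<forall>q\<in>G. \<forall>c d. (c *\<^sub>R fst p + d *\<^sub>R fst q, c * snd p + d * snd q) \<in> G) \<and>
   (\<forall>p\<in>G. snd p \<le> norm (fst p))"

lemma vgraph_scale:
  assumes "vgraph Y f G" "(x,a) \<in> G" shows "(c *\<^sub>R x, c * a) \<in> G"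
proof -
  have cl: "\<forall>p\<in>G. \<forall>q\<in>G. \<forall>c d. (c *\<^sub>R fst p + d *\<^sub>R fst q, c * snd p + d * snd q) \<in> G"
    using assms(1) unfolding vgraph_def by blast
  have "(c *\<^sub>R fst (x,a) + 0 *\<^sub>R fst (x,a), c * snd (x,a) + 0 * snd (x,a)) \<in> G"
    using bspec[OF bspec[OF cl assms(2)] assms(2)] by blast
  then show ?thesis by simp
qed

lemma vgraph_add:
  assumes "vgraph Y f G" "(x,a) \<in> G" "(y,b) \<in> G" shows "(x + y, a + b) \<in> G"
proof -
  have cl: "\<forall>p\<in>G. \<forall>q\<in>G. \<forall>c d. (c *\<^sub>R fst p + d *\<^sub>R fst q, c * snd p + d * snd q) \<in> G"
    using assms(1) unfolding vgraph_def by blast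
  have "(1 *\<^sub>R fst (x,a) + 1 *\<^sub>R fst (y,b), 1 * snd (x,a) + 1 * snd (y,b)) \<in> G"
    using bspec[OF bspec[OF cl assms(2)] assms(3)] by blast
  then show ?thesis by simp
qed

lemma vgraph_bound:
  assumes "vgraph Y f G" "(x,a) \<in> G" shows "a \<le> norm x"
proof -
  have "\<forall>p\<in>G. snd p \<le> norm (fst p)" using assms(1) unfolding vgraph_def by blast
  then show ?thesis using assms(2) by fastforce
qed

lemma vgraph_fun:
  assumes "vgraph Y f G" "(x,a) \<in> G" "(x,b) \<in> G" shows "a = b"
proof -
  have "(x + (-1) *\<^sub>R x, a + (-1) * b) \<in> G" using vgraph_add[OF assms(1,2) vgraph_scale[OF assms(1,3)]] .
  then have "a - b \<le> 0" using vgraph_bound[OF assms(1)] by fastforce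
  moreover have "(x + (-1) *\<^sub>R x, b + (-1) * a) \<in> G" using vgraph_add[OF assms(1,3) vgraph_scale[OF assms(1,2)]] .
  then have "b - a \<le> 0" using vgraph_bound[OF assms(1)] by fastforce
  ultimately show ?thesis by simp
qed

lemma vgraph_extend:
  assumes G: "vgraph Y f G" and ne: "G \<noteq> {}" and x0: "\<forall>a. (x0, a) \<notin> G"
  shows "\<exists>G'. vgraph Y f G' \<and> G \<subseteq> G' \<and> G' \<noteq> G"
proof -
  define S where "S = {snd p - norm (fst p - x0) | p. p \<in> G}"
  define c where "c = Sup S"
  have key: "snd p - norm (fst p - x0) \<le> norm (fst q + x0) - snd q" if "p \<in> G" "q \<in> G" for p q
  proof -
    have "(fst p + fst q, snd p + snd q) \<in> G" using vgraph_add[OF G, of "fst p" "snd p" "fst q" "snd q"] that by simp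
    then have "snd p + snd q \<le> norm (fst p + fst q)" using vgraph_bound[OF G] by blast
    also have "\<dots> \<le> norm (fst p - x0) + norm (fst q + x0)"
      using norm_triangle_ineq[of "fst p - x0" "fst q + x0"] by simp
    finally show ?thesis by simp
  qed
  have Sne: "S \<noteq> {}" using ne unfolding S_def by blast
  have up: "snd p - norm (fst p - x0) \<le> c" if "p \<in> G" for p
    unfolding c_def
  proof (rule cSup_upper)
    show "snd p - norm (fst p - x0) \<in> S" using that S_def by blast
    obtain q where "q \<in> G" using ne by blast
    then show "bdd_above S" unfolding bdd_above_def S_def using key by blast
  qed
  have lo: "c \<le> norm (fst q + x0) - snd q" if "q \<in> G" for q
    unfolding c_def using Sne key that S_def by (auto intro!: cSup_least)
  define G' where "G' = {(fst p + t *\<^sub>R x0, snd p + t * c) | p t. p \<in> G}"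
  have "vgraph Y f G'"
    unfolding vgraph_def
  proof (intro conjI ballI allI)
    fix y assume "y \<in> Y"
    then have "(y, f y) \<in> G" using G unfolding vgraph_def by blast
    moreover have "(y, f y) = (fst (y, f y) + 0 *\<^sub>R x0, snd (y, f y) + 0 * c)" by simp
    ultimately show "(y, f y) \<in> G'" unfolding G'_def by blast
  next
    fix p q a b assume "p \<in> G'" "q \<in> G'"
    then obtain p1 t1 q1 t2 where p: "p = (fst p1 + t1 *\<^sub>R x0, snd p1 + t1 * c)" "p1 \<in> G"
      and q: "q = (fst q1 + t2 *\<^sub>R x0, snd q1 + t2 * c)" "q1 \<in> G" unfolding G'_def by blast
    define P where "P = (a *\<^sub>R fst p1 + b *\<^sub>R fst q1, a * snd p1 + b * snd q1)"
    have PG: "P \<in> G" using G p q unfolding vgraph_def P_def by blast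
    have "(a *\<^sub>R fst p + b *\<^sub>R fst q, a * snd p + b * snd q) = (fst P + (a*t1 + b*t2) *\<^sub>R x0, snd P + (a*t1 + b*t2) * c)"
      using p q unfolding P_def by (simp add: algebra_simps)
    then show "(a *\<^sub>R fst p + b *\<^sub>R fst q, a * snd p + b * snd q) \<in> G'"
      unfolding G'_def using PG by blast
  next
    fix p assume "p \<in> G'"
    then obtain p1 t where p: "p = (fst p1 + t *\<^sub>R x0, snd p1 + t * c)" "p1 \<in> G" unfolding G'_def by blast
    have "snd p1 + t * c \<le> norm (fst p1 + t *\<^sub>R x0)"
    proof (cases "t = 0")
      case True then show ?thesis using vgraph_bound[OF G, of "fst p1" "snd p1"] p by simp
    next
      case False
      show ?thesis
      proof (cases "t > 0")
        case True
        have "((1/t) *\<^sub>R fst p1, (1/t) * snd p1) \<in> G" using vgraph_scale[OF G, of "fst p1" "snd p1" "1/t"] p by simp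
        from lo[OF this] have "c \<le> norm ((1/t) *\<^sub>R fst p1 + x0) - (1/t) * snd p1" by simp
        then have "t * c \<le> t * (norm ((1/t) *\<^sub>R fst p1 + x0) - (1/t) * snd p1)"
          using True by (simp add: mult_left_mono)
        also have "\<dots> = t * norm ((1/t) *\<^sub>R fst p1 + x0) - snd p1"
          using True by (simp add: right_diff_distrib)
        also have e1: "t *\<^sub>R ((1/t) *\<^sub>R fst p1 + x0) = fst p1 + t *\<^sub>R x0"
          using True by (simp add: algebra_simps)
        then have "t * norm ((1/t) *\<^sub>R fst p1 + x0) = norm (fst p1 + t *\<^sub>R x0)"
          by (metis norm_scaleR abs_of_pos True)
        finally show ?thesis by simp
      next
        case False
        define s where "s = - t"
        have s: "s > 0" using False \<open>t \<noteq> 0\<close> s_def by simp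
        have "((1/s) *\<^sub>R fst p1, (1/s) * snd p1) \<in> G" using vgraph_scale[OF G, of "fst p1" "snd p1" "1/s"] p by simp
        from up[OF this] have "(1/s) * snd p1 - norm ((1/s) *\<^sub>R fst p1 - x0) \<le> c" by simp
        then have "s * ((1/s) * snd p1 - norm ((1/s) *\<^sub>R fst p1 - x0)) \<le> s * c"
          using s by (simp add: mult_left_mono)
        moreover have "s * ((1/s) * snd p1 - norm ((1/s) *\<^sub>R fst p1 - x0)) = snd p1 - s * norm ((1/s) *\<^sub>R fst p1 - x0)"
          using s by (simp add: right_diff_distrib)
        moreover have "s *\<^sub>R ((1/s) *\<^sub>R fst p1 - x0) = fst p1 + t *\<^sub>R x0"
          using s s_def by (simp add: algebra_simps)
        then have "s * norm ((1/s) *\<^sub>R fst p1 - x0) = norm (fst p1 + t *\<^sub>R x0)"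
          by (metis norm_scaleR abs_of_pos s)
        ultimately show ?thesis using s_def by simp
      qed
    qed
    then show "snd p \<le> norm (fst p)" using p by simp
  qed
  moreover have "G \<subseteq> G'"
  proof
    fix p assume "p \<in> G"
    moreover have "p = (fst p + 0 *\<^sub>R x0, snd p + 0 * c)" by simp
    ultimately show "p \<in> G'" unfolding G'_def by blast
  qed
  moreover have "(x0, c) \<in> G'"
  proof -
    obtain p where "p \<in> G" using ne by blast
    then have "(0 *\<^sub>R fst p, 0 * snd p) \<in> G" using vgraph_scale[OF G, of "fst p" "snd p" 0] by simp
    then have "((0::'a), (0::real)) \<in> G" by simp
    moreover have "(x0, c) = (fst (0::'a, 0::real) + 1 *\<^sub>R x0, snd (0::'a, 0::real) + 1 * c)" by simp
    ultimately show ?thesis unfolding G'_def by blast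
  qed
  then have "G' \<noteq> G" using x0 by blast
  ultimately show ?thesis by blast
qed

lemma hahn_banach:
  fixes Y :: "'a::real_normed_vector set"
  assumes Y: "subspace Y" and lin: "\<forall>x\<in>Y. \<forall>y\<in>Y. \<forall>a b. f (a *\<^sub>R x + b *\<^sub>R y) = a * f x + b * f y"
    and bd: "\<forall>y\<in>Y. f y \<le> norm y"
  shows "\<exists>F. (\<forall>x y a b. F (a *\<^sub>R x + b *\<^sub>R y) = a * F x + b * F y) \<and> (\<forall>x. \<bar>F x\<bar> \<le> norm x) \<and> (\<forall>y\<in>Y. F y = f y)"
proof -
  define A where "A = {G. vgraph Y f G}"
  define G0 where "G0 = (\<lambda>y. (y, f y)) ` Y"
  have "G0 \<in> A" unfolding A_def mem_Collect_eq vgraph_def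
  proof (intro conjI ballI allI)
    fix y assume "y \<in> Y" then show "(y, f y) \<in> G0" unfolding G0_def by blast
  next
    fix p q c d assume "p \<in> G0" "q \<in> G0"
    then obtain x y where xy: "x \<in> Y" "y \<in> Y" "p = (x, f x)" "q = (y, f y)" unfolding G0_def by blast
    then have "c *\<^sub>R x + d *\<^sub>R y \<in> Y" using Y by (simp add: subspace_add subspace_scale)
    moreover have "f (c *\<^sub>R x + d *\<^sub>R y) = c * f x + d * f y" using lin xy by blast
    ultimately show "(c *\<^sub>R fst p + d *\<^sub>R fst q, c * snd p + d * snd q) \<in> G0"
      unfolding G0_def using xy by (simp add: image_iff)
  next
    fix p assume "p \<in> G0" then show "snd p \<le> norm (fst p)" unfolding G0_def using bd by auto
  qed
  then have "A \<noteq> {}" by blast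
  moreover have "\<Union>C \<in> A" if "C \<noteq> {}" "subset.chain A C" for C
  proof -
    have CA: "C \<subseteq> A" and ch: "\<forall>x\<in>C. \<forall>y\<in>C. x \<subseteq> y \<or> y \<subseteq> x" using that unfolding subset.chain_def by auto
    show ?thesis unfolding A_def mem_Collect_eq vgraph_def
    proof (intro conjI ballI allI)
      fix y assume "y \<in> Y" then show "(y, f y) \<in> \<Union>C" using that CA unfolding A_def vgraph_def by blast
    next
      fix p q c d assume "p \<in> \<Union>C" "q \<in> \<Union>C"
      then obtain G1 G2 where "G1 \<in> C" "G2 \<in> C" "p \<in> G1" "q \<in> G2" by blast
      then obtain G3 where "G3 \<in> C" "p \<in> G3" "q \<in> G3" using ch by blast
      then show "(c *\<^sub>R fst p + d *\<^sub>R fst q, c * snd p + d * snd q) \<in> \<Union>C"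
        using CA unfolding A_def vgraph_def by blast
    next
      fix p assume "p \<in> \<Union>C" then show "snd p \<le> norm (fst p)" using CA unfolding A_def vgraph_def by blast
    qed
  qed
  ultimately obtain M where M: "M \<in> A" "\<forall>X\<in>A. M \<subseteq> X \<longrightarrow> X = M"
    using subset_Zorn_nonempty[of A] by blast
  have MG: "vgraph Y f M" using M A_def by simp
  have Mne: "M \<noteq> {}" using MG Y unfolding vgraph_def subspace_def by blast
  have tot: "\<exists>a. (x, a) \<in> M" for x
  proof (rule ccontr)
    assume "\<nexists>a. (x, a) \<in> M"
    then obtain G' where "vgraph Y f G'" "M \<subseteq> G'" "G' \<noteq> M" using vgraph_extend[OF MG Mne] by blast
    then show False using M A_def by blast
  qed
  define F where "F x = (SOME a. (x, a) \<in> M)" for x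
  have FM: "(x, F x) \<in> M" for x unfolding F_def using tot by (rule someI_ex)
  have Fu: "F x = a" if "(x, a) \<in> M" for x a using vgraph_fun[OF MG FM that] .
  have "F (a *\<^sub>R x + b *\<^sub>R y) = a * F x + b * F y" for x y a b
    using Fu[OF vgraph_add[OF MG vgraph_scale[OF MG FM[of x], of a] vgraph_scale[OF MG FM[of y], of b]]] .
  moreover have "\<bar>F x\<bar> \<le> norm x" for x
  proof -
    have "F x \<le> norm x" using vgraph_bound[OF MG FM] .
    moreover have "F (-x) \<le> norm x" using vgraph_bound[OF MG FM[of "-x"]] by simp
    moreover have "F (-x) = - F x" using Fu[OF vgraph_scale[OF MG FM[of x], of "-1"]] by simp
    ultimately show ?thesis by simp
  qed
  moreover have "F y = f y" if "y \<in> Y" for y proof -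
    have "(y, f y) \<in> M" using MG that unfolding vgraph_def by blast
    then show ?thesis by (rule Fu)
  qed
  ultimately show ?thesis by blast
qed


definition lin1 :: "('a::real_normed_vector \<Rightarrow> real) \<Rightarrow> bool" where
  "lin1 F \<longleftrightarrow> (\<forall>x y a b. F (a *\<^sub>R x + b *\<^sub>R y) = a * F x + b * F y) \<and> (\<forall>x. \<bar>F x\<bar> \<le> norm x)"

lemma fun_scale:
  assumes "is_functional_on Y f" "x \<in> Y" shows "f (a *\<^sub>R x) = a * f x"
proof -
  have "f (a *\<^sub>R x + 0 *\<^sub>R x) = a * f x + 0 * f x" using assms unfolding is_functional_on_def by blast
  then show ?thesis by simp
qed

lemma fun_zero:
  assumes "is_functional_on Y f" "x \<in> Y" shows "f 0 = 0"
  using fun_scale[OF assms, of 0] by simp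

lemma fun_diff:
  assumes "is_functional_on Y f" "x \<in> Y" "y \<in> Y" shows "f (x - y) = f x - f y"
proof -
  have "f (1 *\<^sub>R x + (-1) *\<^sub>R y) = 1 * f x + (-1) * f y" using assms unfolding is_functional_on_def by blast
  then show ?thesis by simp
qed

lemma fun_add:
  assumes "is_functional_on Y f" "x \<in> Y" "y \<in> Y" shows "f (x + y) = f x + f y"
proof -
  have "f (1 *\<^sub>R x + 1 *\<^sub>R y) = 1 * f x + 1 * f y" using assms unfolding is_functional_on_def by blast
  then show ?thesis by simp
qed

lemma dn_set_ne: "subspace Y \<Longrightarrow> {y\<in>Y. norm y \<le> 1} \<noteq> {}"
  using subspace_0 by fastforce

lemma dn_bdd:
  assumes "is_functional_on Y f"
  shows "bdd_above ((\<lambda>y. \<bar>f y\<bar>) ` {y\<in>Y. norm y \<le> 1})"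
proof -
  obtain B where B: "\<forall>y\<in>Y. \<bar>f y\<bar> \<le> B * norm y" using assms unfolding is_functional_on_def by blast
  have "\<bar>f y\<bar> \<le> \<bar>B\<bar>" if "y \<in> Y" "norm y \<le> 1" for y
  proof -
    have "\<bar>f y\<bar> \<le> B * norm y" using B that by blast
    also have "\<dots> \<le> \<bar>B\<bar> * norm y" by (simp add: mult_right_mono)
    also have "\<dots> \<le> \<bar>B\<bar> * 1" using that mult_left_mono[of "norm y" 1 "\<bar>B\<bar>"] by simp
    finally show ?thesis by simp
  qed
  then show ?thesis unfolding bdd_above_def by blast
qed

lemma dn_ge:
  assumes "is_functional_on Y f" "y \<in> Y" "norm y \<le> 1"
  shows "\<bar>f y\<bar> \<le> dual_norm_on Y f"
  unfolding dual_norm_on_def using assms dn_bdd[OF assms(1)] by (intro cSUP_upper) auto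

lemma dn_le:
  assumes "subspace Y" "\<And>y. y \<in> Y \<Longrightarrow> norm y \<le> 1 \<Longrightarrow> \<bar>f y\<bar> \<le> c"
  shows "dual_norm_on Y f \<le> c"
  unfolding dual_norm_on_def using assms dn_set_ne[OF assms(1)] by (intro cSUP_least) auto

lemma dn_nonneg:
  assumes "subspace Y" "is_functional_on Y f" shows "0 \<le> dual_norm_on Y f"
  using dn_ge[OF assms(2) subspace_0[OF assms(1)]] by simp

lemma dn_scale:
  assumes "subspace Y" "is_functional_on Y f" "y \<in> Y"
  shows "\<bar>f y\<bar> \<le> dual_norm_on Y f * norm y"
proof (cases "y = 0")
  case True then show ?thesis using fun_zero[OF assms(2,3)] by simp
next
  case False
  let ?u = "(1 / norm y) *\<^sub>R y"
  have u: "?u \<in> Y" "norm ?u \<le> 1" using assms False by (auto simp: subspace_scale)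
  have "\<bar>f ?u\<bar> = \<bar>f y\<bar> / norm y" using fun_scale[OF assms(2,3)] by (simp add: abs_mult)
  then have "\<bar>f y\<bar> / norm y \<le> dual_norm_on Y f" using dn_ge[OF assms(2) u] by simp
  then show ?thesis using False by (simp add: divide_le_eq mult.commute)
qed

lemma lin1_fun: "lin1 F \<Longrightarrow> is_functional_on Y F"
  unfolding lin1_def is_functional_on_def by (metis mult_1)

lemma lin1_J:
  assumes "lin1 F" "subspace Y" "z \<in> Y" "norm z = 1" "F z = 1"
  shows "F \<in> Jset Y z"
proof -
  have "dual_norm_on Y F \<le> 1"
  proof (rule dn_le[OF assms(2)])
    fix y assume "y \<in> Y" "norm y \<le> 1"
    then show "\<bar>F y\<bar> \<le> 1" using assms(1) unfolding lin1_def by (meson order_trans)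
  qed
  moreover have "1 \<le> dual_norm_on Y F" using dn_ge[OF lin1_fun[OF assms(1)] assms(3)] assms by simp
  ultimately show ?thesis unfolding Jset_def using lin1_fun[OF assms(1)] assms by simp
qed

lemma J_lin1:
  assumes "F \<in> Jset UNIV z" shows "lin1 F"
proof -
  have f: "is_functional_on UNIV F" "dual_norm_on UNIV F = 1" using assms unfolding Jset_def by auto
  then show ?thesis unfolding lin1_def is_functional_on_def
    using dn_scale[OF subspace_UNIV f(1)] by auto
qed

lemma J_bound:
  assumes "subspace Y" "f \<in> Jset Y z" "y \<in> Y" shows "\<bar>f y\<bar> \<le> norm y"
  using dn_scale[OF assms(1) _ assms(3), of f] assms(2) unfolding Jset_def by auto

lemma fun_minus:
  assumes "is_functional_on Y f" "is_functional_on Y g"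
  shows "is_functional_on Y (\<lambda>x. f x - g x)"
proof -
  obtain B1 where B1: "\<forall>y\<in>Y. \<bar>f y\<bar> \<le> B1 * norm y" using assms unfolding is_functional_on_def by blast
  obtain B2 where B2: "\<forall>y\<in>Y. \<bar>g y\<bar> \<le> B2 * norm y" using assms unfolding is_functional_on_def by blast
  have "\<bar>f y - g y\<bar> \<le> (B1 + B2) * norm y" if "y \<in> Y" for y
    using B1 B2 that abs_triangle_ineq4[of "f y" "g y"] by (simp add: distrib_right) (smt (verit))
  moreover have "(f (a *\<^sub>R x + b *\<^sub>R y) - g (a *\<^sub>R x + b *\<^sub>R y)) = a * (f x - g x) + b * (f y - g y)"
    if "x \<in> Y" "y \<in> Y" for x y a b
    using assms that unfolding is_functional_on_def by (simp add: algebra_simps)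
  ultimately show ?thesis unfolding is_functional_on_def by blast
qed

lemma J_diff_le2:
  assumes "subspace Y" "f \<in> Jset Y z" "g \<in> Jset Y z"
  shows "dual_norm_on Y (\<lambda>x. f x - g x) \<le> 2"
proof (rule dn_le[OF assms(1)])
  fix y assume "y \<in> Y" "norm y \<le> 1"
  then have "\<bar>f y\<bar> \<le> 1" "\<bar>g y\<bar> \<le> 1" using J_bound[OF assms(1)] assms by fastforce+
  then show "\<bar>f y - g y\<bar> \<le> 2" by simp
qed

lemma diam_le:
  assumes "subspace Y" "Jset Y z \<noteq> {}"
    "\<And>f g. f \<in> Jset Y z \<Longrightarrow> g \<in> Jset Y z \<Longrightarrow> dual_norm_on Y (\<lambda>x. f x - g x) \<le> e"
  shows "diam_J Y z \<le> e"
  unfolding diam_J_def using assms by (intro cSUP_least) auto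

lemma diam_ge:
  assumes "subspace Y" "f \<in> Jset Y z" "g \<in> Jset Y z"
  shows "dual_norm_on Y (\<lambda>x. f x - g x) \<le> diam_J Y z"
  unfolding diam_J_def
proof (rule cSUP_upper2[where x="(f,g)"])
  show "bdd_above ((\<lambda>p. dual_norm_on Y (\<lambda>x. fst p x - snd p x)) ` (Jset Y z \<times> Jset Y z))"
    unfolding bdd_above_def using J_diff_le2[OF assms(1)] by fastforce
qed (use assms in auto)

lemma norming:
  fixes x :: "'a::real_normed_vector"
  shows "\<exists>F. lin1 F \<and> F x = norm x"
proof (cases "x = 0")
  case True
  then show ?thesis by (intro exI[of _ "\<lambda>_. 0"]) (simp add: lin1_def)
next
  case False
  define Y where "Y = range (\<lambda>t. t *\<^sub>R x)"
  define f where "f y = (THE t. y = t *\<^sub>R x) * norm x" for y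
  have ft: "f (t *\<^sub>R x) = t * norm x" for t
  proof -
    have "(THE s. t *\<^sub>R x = s *\<^sub>R x) = t"
      using False by (intro the_equality) (auto simp: scaleR_cancel_right)
    then show ?thesis unfolding f_def by simp
  qed
  have Ysub: "subspace Y" unfolding Y_def using subspace_span[of "{x}"] by (simp add: span_singleton)
  have "\<forall>u\<in>Y. \<forall>v\<in>Y. \<forall>a b. f (a *\<^sub>R u + b *\<^sub>R v) = a * f u + b * f v"
  proof (intro ballI allI)
    fix u v a b assume "u \<in> Y" "v \<in> Y"
    then obtain s t where "u = s *\<^sub>R x" "v = t *\<^sub>R x" unfolding Y_def by blast
    moreover have "a *\<^sub>R (s *\<^sub>R x) + b *\<^sub>R (t *\<^sub>R x) = (a * s + b * t) *\<^sub>R x" by (simp add: algebra_simps)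
    ultimately show "f (a *\<^sub>R u + b *\<^sub>R v) = a * f u + b * f v" by (simp only: ft) (simp add: algebra_simps)
  qed
  moreover have "\<forall>y\<in>Y. f y \<le> norm y" unfolding Y_def by (auto simp: ft mult_right_mono)
  ultimately obtain F where F: "\<forall>x y a b. F (a *\<^sub>R x + b *\<^sub>R y) = a * F x + b * F y"
      "\<forall>x. \<bar>F x\<bar> \<le> norm x" "\<forall>y\<in>Y. F y = f y"
    using hahn_banach[OF Ysub] by blast
  have "x \<in> Y" unfolding Y_def by (metis rangeI scaleR_one)
  then have "F x = norm x" using F(3) ft[of 1] by simp
  then show ?thesis using F unfolding lin1_def by blast
qed

lemma J_ne:
  assumes "subspace Y" "z \<in> Y" "norm z = 1" shows "Jset Y z \<noteq> {}"
  using norming[of z] lin1_J[OF _ assms] assms(3) by force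

lemma lin1_extend:
  assumes "subspace Y" "f \<in> Jset Y z"
  shows "\<exists>F. lin1 F \<and> (\<forall>y\<in>Y. F y = f y)"
proof -
  have "\<forall>x\<in>Y. \<forall>y\<in>Y. \<forall>a b. f (a *\<^sub>R x + b *\<^sub>R y) = a * f x + b * f y"
    using assms unfolding Jset_def is_functional_on_def by blast
  moreover have "\<forall>y\<in>Y. f y \<le> norm y" using J_bound[OF assms] by (metis abs_le_D1)
  ultimately show ?thesis using hahn_banach[OF assms(1)] unfolding lin1_def by blast
qed

lemma partA:
  assumes "eps_smooth (UNIV::'a::real_normed_vector set) e" "subspace (Y::'a set)"
  shows "eps_smooth Y e"
  unfolding eps_smooth_def eps_smooth_point_def
proof (intro ballI impI)
  fix z assume z: "z \<in> Y" "norm z = 1"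
  have dX: "diam_J UNIV z \<le> e" using assms(1) z unfolding eps_smooth_def eps_smooth_point_def by blast
  show "diam_J Y z \<le> e"
  proof (rule diam_le[OF assms(2) J_ne[OF assms(2) z]])
    fix f g assume fg: "f \<in> Jset Y z" "g \<in> Jset Y z"
    obtain F where F: "lin1 F" "\<forall>y\<in>Y. F y = f y" using lin1_extend[OF assms(2) fg(1)] by blast
    obtain G where G: "lin1 G" "\<forall>y\<in>Y. G y = g y" using lin1_extend[OF assms(2) fg(2)] by blast
    have FJ: "F \<in> Jset UNIV z" using lin1_J[OF F(1) subspace_UNIV _ z(2)] F(2) fg(1) z unfolding Jset_def by simp
    have GJ: "G \<in> Jset UNIV z" using lin1_J[OF G(1) subspace_UNIV _ z(2)] G(2) fg(2) z unfolding Jset_def by simp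
    have "dual_norm_on Y (\<lambda>x. f x - g x) \<le> dual_norm_on UNIV (\<lambda>x. F x - G x)"
    proof (rule dn_le[OF assms(2)])
      fix y assume "y \<in> Y" "norm y \<le> 1"
      then show "\<bar>f y - g y\<bar> \<le> dual_norm_on UNIV (\<lambda>x. F x - G x)"
        using dn_ge[OF fun_minus[OF lin1_fun[OF F(1)] lin1_fun[OF G(1)]], of y] F(2) G(2) by simp
    qed
    also have "\<dots> \<le> diam_J UNIV z" using diam_ge[OF subspace_UNIV FJ GJ] .
    finally show "dual_norm_on Y (\<lambda>x. f x - g x) \<le> e" using dX by simp
  qed
qed

lemma dim2:
  fixes z y :: "'a::real_normed_vector"
  assumes "z \<noteq> 0" "y \<notin> span {z}"
  shows "subspace (span {z, y}) \<and> dim (span {z, y}) = 2"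
proof -
  have "independent {z}" using assms(1) by (simp add: independent_insert)
  then have ind: "independent (insert y {z})" using assms(2) by (simp add: independent_insert)
  have "y \<noteq> z" using assms(2) span_base[of z "{z}"] by auto
  then have "card {z, y} = 2" by simp
  then show ?thesis using dim_span_eq_card_independent[OF ind] by (simp add: insert_commute)
qed

lemma partB:
  assumes "\<forall>Y::'a::real_normed_vector set. subspace Y \<and> dim Y = 2 \<longrightarrow> eps_smooth Y e" "0 \<le> e"
  shows "eps_smooth (UNIV::'a set) e"
  unfolding eps_smooth_def eps_smooth_point_def
proof (intro ballI impI)
  fix z :: 'a assume z: "norm z = 1"
  show "diam_J UNIV z \<le> e"
  proof (rule diam_le[OF subspace_UNIV J_ne[OF subspace_UNIV UNIV_I z]])
    fix F G assume FG: "F \<in> Jset UNIV z" "G \<in> Jset UNIV z"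
    have F: "lin1 F" and G: "lin1 G" using J_lin1 FG by auto
    have Fz: "F z = 1" "G z = 1" using FG z unfolding Jset_def by auto
    show "dual_norm_on UNIV (\<lambda>x. F x - G x) \<le> e"
    proof (rule dn_le[OF subspace_UNIV])
      fix y :: 'a assume y: "norm y \<le> 1"
      show "\<bar>F y - G y\<bar> \<le> e"
      proof (cases "y \<in> span {z}")
        case True
        then obtain t where "y = t *\<^sub>R z" by (auto simp: span_singleton)
        then show ?thesis using fun_scale[OF lin1_fun[OF F], of z UNIV t] fun_scale[OF lin1_fun[OF G], of z UNIV t] Fz assms(2) by simp
      next
        case False
        have z0: "z \<noteq> 0" using z by auto
        define Y where "Y = span {z, y}"
        have Y: "subspace Y" "dim Y = 2" using dim2[OF z0 False] Y_def by auto
        have zY: "z \<in> Y" "y \<in> Y" unfolding Y_def by (auto intro: span_base)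
        have "F \<in> Jset Y z" "G \<in> Jset Y z" using lin1_J[OF F Y(1) zY(1) z] lin1_J[OF G Y(1) zY(1) z] Fz by auto
        then have "dual_norm_on Y (\<lambda>x. F x - G x) \<le> diam_J Y z" using diam_ge[OF Y(1)] by blast
        also have "\<dots> \<le> e" using assms(1) Y zY z unfolding eps_smooth_def eps_smooth_point_def by blast
        finally show ?thesis
          using dn_ge[OF fun_minus[OF lin1_fun[OF F] lin1_fun[OF G]] zY(2) y] by simp
      qed
    qed
  qed
qed


lemma coord_subseq:
  fixes d :: "nat \<Rightarrow> 'b \<Rightarrow> real"
  assumes "finite B" "\<And>n b. b \<in> B \<Longrightarrow> \<bar>d n b\<bar> \<le> M"
  shows "\<exists>l r. strict_mono r \<and> (\<forall>b\<in>B. (\<lambda>n. d (r n) b) \<longlonglongrightarrow> l b)"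
proof -
  have "\<forall>\<delta>\<subseteq>B. \<exists>l::'b\<Rightarrow>real. \<exists> r::nat\<Rightarrow>nat.
    strict_mono r \<and> (\<forall>\<epsilon>>0. eventually (\<lambda>n. \<forall>i\<in>\<delta>. dist (d (r n) i) (l i) < \<epsilon>) sequentially)"
  proof (rule compact_lemma_general[where proj = "\<lambda>x k. x k" and unproj = "\<lambda>x. x"])
    show "finite B" by fact
    fix k assume "k \<in> B"
    then show "bounded ((\<lambda>x. x k) ` range d)" unfolding bounded_iff using assms(2) by auto
  qed auto
  then obtain l r where lr: "strict_mono r" "\<forall>\<epsilon>>0. eventually (\<lambda>n. \<forall>i\<in>B. dist (d (r n) i) (l i) < \<epsilon>) sequentially"
    by blast
  have "(\<lambda>n. d (r n) b) \<longlonglongrightarrow> l b" if "b \<in> B" for b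
    unfolding tendsto_iff
  proof (intro allI impI)
    fix e :: real assume "e > 0"
    then have "eventually (\<lambda>n. \<forall>i\<in>B. dist (d (r n) i) (l i) < e) sequentially" using lr(2) by blast
    then show "eventually (\<lambda>n. dist (d (r n) b) (l b) < e) sequentially"
      by (rule eventually_mono) (use that in blast)
  qed
  then show ?thesis using lr(1) by blast
qed

lemma norm_equiv:
  fixes B :: "'a::real_normed_vector set"
  assumes fin: "finite B" and ind: "independent B"
  shows "\<exists>m>0. \<forall>c. m * (\<Sum>b\<in>B. \<bar>c b\<bar>) \<le> norm (\<Sum>b\<in>B. c b *\<^sub>R b)"
proof (rule ccontr)
  assume "\<not> ?thesis"
  then have A: "\<forall>m>0. \<exists>c. m * (\<Sum>b\<in>B. \<bar>c b\<bar>) > norm (\<Sum>b\<in>B. c b *\<^sub>R b)"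
    by (auto simp: not_le)
  have "\<exists>c. 1 / real (Suc n) * (\<Sum>b\<in>B. \<bar>c b\<bar>) > norm (\<Sum>b\<in>B. c b *\<^sub>R b)" for n :: nat
    using A[rule_format, of "1 / real (Suc n)"] by simp
  then have "\<forall>n::nat. \<exists>c. 1 / real (Suc n) * (\<Sum>b\<in>B. \<bar>c b\<bar>) > norm (\<Sum>b\<in>B. c b *\<^sub>R b)"
    by blast
  then have "\<exists>c. \<forall>n::nat. 1 / real (Suc n) * (\<Sum>b\<in>B. \<bar>c n b\<bar>) > norm (\<Sum>b\<in>B. c n b *\<^sub>R b)"
    by (rule choice)
  then obtain c where c: "\<And>n. 1 / real (Suc n) * (\<Sum>b\<in>B. \<bar>c n b\<bar>) > norm (\<Sum>b\<in>B. c n b *\<^sub>R b)"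
    by blast
  define s where "s n = (\<Sum>b\<in>B. \<bar>c n b\<bar>)" for n
  have spos: "s n > 0" for n
  proof -
    have "0 \<le> norm (\<Sum>b\<in>B. c n b *\<^sub>R b)" by simp
    then have "0 < 1 / real (Suc n) * s n" using c[of n] unfolding s_def by linarith
    then show ?thesis using zero_less_mult_pos[of "1 / real (Suc n)" "s n"] by simp
  qed
  define d where "d n b = c n b / s n" for n b
  have Sd: "(\<Sum>b\<in>B. \<bar>d n b\<bar>) = 1" for n
  proof -
    have "(\<Sum>b\<in>B. \<bar>d n b\<bar>) = (\<Sum>b\<in>B. \<bar>c n b\<bar>) / s n"
      unfolding d_def using spos[of n] by (simp add: sum_divide_distrib abs_div)
    then show ?thesis using spos[of n] s_def by simp
  qed
  have Ld: "norm (\<Sum>b\<in>B. d n b *\<^sub>R b) < 1 / real (Suc n)" for n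
  proof -
    have "(\<Sum>b\<in>B. d n b *\<^sub>R b) = (1 / s n) *\<^sub>R (\<Sum>b\<in>B. c n b *\<^sub>R b)"
      unfolding d_def by (simp add: scaleR_sum_right)
    then have e: "norm (\<Sum>b\<in>B. d n b *\<^sub>R b) = norm (\<Sum>b\<in>B. c n b *\<^sub>R b) / s n"
      using spos[of n] by simp
    have cn: "norm (\<Sum>b\<in>B. c n b *\<^sub>R b) < 1 / real (Suc n) * s n" using c[of n] unfolding s_def .
    have "norm (\<Sum>b\<in>B. c n b *\<^sub>R b) / s n < (1 / real (Suc n) * s n) / s n"
      by (rule divide_strict_right_mono[OF cn spos])
    also have "\<dots> = 1 / real (Suc n)" using spos[of n] by simp
    finally show ?thesis using e by simp
  qed
  have dbd: "\<bar>d n b\<bar> \<le> 1" if "b \<in> B" for n b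
    using member_le_sum[of b B "\<lambda>b. \<bar>d n b\<bar>"] that fin Sd[of n] by simp
  have "\<exists>l r. strict_mono r \<and> (\<forall>b\<in>B. (\<lambda>n. d (r n) b) \<longlonglongrightarrow> l b)"
    by (rule coord_subseq[OF fin]) (rule dbd)
  then obtain l r where lr: "strict_mono r" "\<forall>b\<in>B. (\<lambda>n. d (r n) b) \<longlonglongrightarrow> l b"
    by blast
  have "(\<lambda>n. \<Sum>b\<in>B. \<bar>d (r n) b\<bar>) \<longlonglongrightarrow> (\<Sum>b\<in>B. \<bar>l b\<bar>)"
    using lr(2) by (intro tendsto_sum tendsto_rabs) auto
  then have Sl: "(\<Sum>b\<in>B. \<bar>l b\<bar>) = 1" using Sd by (simp add: LIMSEQ_const_iff)
  have L1: "(\<lambda>n. \<Sum>b\<in>B. d (r n) b *\<^sub>R b) \<longlonglongrightarrow> (\<Sum>b\<in>B. l b *\<^sub>R b)"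
    using lr(2) by (intro tendsto_sum tendsto_scaleR tendsto_const) auto
  have h0: "((\<lambda>n. 1 / real (Suc n)) \<circ> r) \<longlonglongrightarrow> 0"
    by (rule LIMSEQ_subseq_LIMSEQ[OF _ lr(1)]) (rule LIMSEQ_Suc[OF lim_1_over_n])
  have h1: "(\<lambda>n. 1 / real (Suc (r n))) \<longlonglongrightarrow> 0" using h0 unfolding comp_def .
  have ev: "eventually (\<lambda>n. norm (\<Sum>b\<in>B. d (r n) b *\<^sub>R b) \<le> 1 / real (Suc (r n))) sequentially"
  proof (rule always_eventually, rule allI)
    fix n show "norm (\<Sum>b\<in>B. d (r n) b *\<^sub>R b) \<le> 1 / real (Suc (r n))" using Ld[of "r n"] by (rule less_imp_le)
  qed
  have L0: "(\<lambda>n. \<Sum>b\<in>B. d (r n) b *\<^sub>R b) \<longlonglongrightarrow> 0" by (rule Lim_null_comparison[OF ev h1])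
  have "(\<Sum>b\<in>B. l b *\<^sub>R b) = 0" using LIMSEQ_unique[OF L1 L0] .
  moreover have "\<exists>v\<in>B. l v \<noteq> 0"
  proof (rule ccontr)
    assume "\<not> (\<exists>v\<in>B. l v \<noteq> 0)"
    then have "(\<Sum>b\<in>B. \<bar>l b\<bar>) = 0" by simp
    then show False using Sl by simp
  qed
  ultimately have "dependent B" using dependent_finite[OF fin] by blast
  then show False using ind by simp
qed

lemma compact_ball_fd:
  assumes "finite B" "span B = (UNIV::'a::real_normed_vector set)"
  shows "compact (cball (0::'a) 1)"
proof -
  obtain B' where B': "B' \<subseteq> B" "independent B'" "B \<subseteq> span B'" using maximal_independent_subset[of B] by blast
  have finB': "finite B'" using B'(1) assms(1) finite_subset by blast
  have "span B \<subseteq> span B'" using span_minimal[OF B'(3) subspace_span] .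
  then have "UNIV \<subseteq> span B'" unfolding assms(2) .
  then have spB': "span B' = UNIV" by (rule top.extremum_uniqueI)
  obtain m where m: "m > 0" "\<And>c. m * (\<Sum>b\<in>B'. \<bar>c b\<bar>) \<le> norm (\<Sum>b\<in>B'. c b *\<^sub>R b)"
    using norm_equiv[OF finB' B'(2)] by blast
  have "seq_compact (cball (0::'a) 1)"
  proof (rule seq_compactI)
    fix x :: "nat \<Rightarrow> 'a" assume x: "\<forall>n. x n \<in> cball 0 1"
    have rg: "range (\<lambda>u. \<Sum>v\<in>B'. u v *\<^sub>R v) = UNIV" using span_finite[OF finB'] unfolding spB' by (rule sym)
    have "\<exists>c. x n = (\<Sum>b\<in>B'. c b *\<^sub>R b)" for n
    proof -
      have "x n \<in> range (\<lambda>u. \<Sum>v\<in>B'. u v *\<^sub>R v)" unfolding rg by (rule UNIV_I)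
      then obtain u where "x n = (\<Sum>v\<in>B'. u v *\<^sub>R v)" by (rule rangeE)
      then show ?thesis by blast
    qed
    then have "\<forall>n. \<exists>c. x n = (\<Sum>b\<in>B'. c b *\<^sub>R b)" by blast
    then have "\<exists>c. \<forall>n. x n = (\<Sum>b\<in>B'. c n b *\<^sub>R b)" by (rule choice)
    then obtain c where c: "\<And>n. x n = (\<Sum>b\<in>B'. c n b *\<^sub>R b)" by blast
    have cb: "\<bar>c n b\<bar> \<le> 1 / m" if "b \<in> B'" for n b
    proof -
      have "m * \<bar>c n b\<bar> \<le> m * (\<Sum>b\<in>B'. \<bar>c n b\<bar>)"
        using member_le_sum[of b B' "\<lambda>b. \<bar>c n b\<bar>"] that finB' m(1) by (simp add: mult_left_mono)
      also have "\<dots> \<le> norm (x n)" using m(2)[of "c n"] c[of n] by simp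
      also have "\<dots> \<le> 1" using x by simp
      finally show ?thesis using m(1) by (simp add: field_simps)
    qed
    have "\<exists>l r. strict_mono r \<and> (\<forall>b\<in>B'. (\<lambda>n. c (r n) b) \<longlonglongrightarrow> l b)"
      by (rule coord_subseq[OF finB']) (rule cb)
    then obtain l r where lr: "strict_mono r" "\<forall>b\<in>B'. (\<lambda>n. c (r n) b) \<longlonglongrightarrow> l b"
      by blast
    have L: "(x \<circ> r) \<longlonglongrightarrow> (\<Sum>b\<in>B'. l b *\<^sub>R b)"
      unfolding o_def c using lr(2) by (intro tendsto_sum tendsto_scaleR tendsto_const) auto
    have "(\<Sum>b\<in>B'. l b *\<^sub>R b) \<in> cball 0 1"
    proof (rule closed_sequentially[OF closed_cball _ L])
      fix n show "(x \<circ> r) n \<in> cball 0 1" using x by simp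
    qed
    then show "\<exists>l\<in>cball 0 1. \<exists>r::nat\<Rightarrow>nat. strict_mono r \<and> (x \<circ> r) \<longlonglongrightarrow> l" using L lr(1) by blast
  qed
  then show ?thesis using compact_eq_seq_compact_metric by blast
qed


lemma lin1_add: "lin1 F \<Longrightarrow> F (x + y) = F x + F y"
  using fun_add[OF lin1_fun[of F UNIV]] by simp

lemma lin1_neg: "lin1 F \<Longrightarrow> F (- x) = - F x"
  using fun_scale[OF lin1_fun[of F UNIV], of x "-1"] by simp

lemma lin1_diff: "lin1 F \<Longrightarrow> F (x - y) = F x - F y"
  using fun_diff[OF lin1_fun[of F UNIV]] by simp

lemma lin1_bd: "lin1 F \<Longrightarrow> \<bar>F x\<bar> \<le> norm x"
  unfolding lin1_def by blast

lemma bad_pairs: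
  fixes n :: nat
  assumes "\<not> eps_smooth (UNIV::'a::real_normed_vector set) (2 - 1 / real (Suc n))"
  shows "\<exists>z y::'a. norm z = 1 \<and> norm y \<le> 1 \<and> 2 - 1 / real (Suc n) < norm (z + y) \<and> 2 - 1 / real (Suc n) < norm (z - y)"
proof -
  define e where "e = 2 - 1 / real (Suc n)"
  obtain z :: 'a where z: "norm z = 1" "\<not> diam_J UNIV z \<le> e"
    using assms unfolding e_def eps_smooth_def eps_smooth_point_def by blast
  obtain F G where FG: "F \<in> Jset UNIV z" "G \<in> Jset UNIV z" "\<not> dual_norm_on UNIV (\<lambda>x. F x - G x) \<le> e"
    using diam_le[OF subspace_UNIV J_ne[OF subspace_UNIV UNIV_I z(1)], of e] z(2) by blast
  obtain y :: 'a where y: "norm y \<le> 1" "\<not> \<bar>F y - G y\<bar> \<le> e"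
    using dn_le[OF subspace_UNIV, of "(\<lambda>x. F x - G x)" e] FG(3) by blast
  have F: "lin1 F" and G: "lin1 G" using J_lin1 FG by auto
  have Fz: "F z = 1" "G z = 1" using FG z unfolding Jset_def by auto
  define y' where "y' = (if F y - G y \<ge> 0 then y else - y)"
  have y'n: "norm y' \<le> 1" using y unfolding y'_def by auto
  have y'd: "F y' - G y' > e" using y lin1_neg[OF F] lin1_neg[OF G] unfolding y'_def by auto
  have b1: "\<bar>F y'\<bar> \<le> 1" "\<bar>G y'\<bar> \<le> 1" using lin1_bd[OF F, of y'] lin1_bd[OF G, of y'] y'n by auto
  have "e < F (z + y')" using lin1_add[OF F] Fz y'd b1 by auto
  also have "\<dots> \<le> norm (z + y')" using lin1_bd[OF F, of "z + y'"] by simp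
  finally have 1: "e < norm (z + y')" .
  have "e < G (z - y')" using lin1_diff[OF G] Fz y'd b1 by auto
  also have "\<dots> \<le> norm (z - y')" using lin1_bd[OF G, of "z - y'"] by simp
  finally have 2: "e < norm (z - y')" .
  show ?thesis using z(1) y'n 1 2 unfolding e_def by blast
qed

lemma not_in_span1:
  fixes z y :: "'a::real_normed_vector"
  assumes "norm z = 1" "norm y \<le> 1" "2 \<le> norm (z + y)" "2 \<le> norm (z - y)"
  shows "y \<notin> span {z}"
proof
  assume "y \<in> span {z}"
  then obtain t where t: "y = t *\<^sub>R z" by (auto simp: span_singleton)
  have "norm y = \<bar>t\<bar>" using t assms(1) by simp
  moreover have "z + y = (1 + t) *\<^sub>R z" "z - y = (1 - t) *\<^sub>R z" using t by (simp_all add: algebra_simps)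
  then have "norm (z + y) = \<bar>1 + t\<bar>" "norm (z - y) = \<bar>1 - t\<bar>" using assms(1) by simp_all
  ultimately show False using assms by (simp add: abs_if split: if_splits)
qed

lemma partC:
  assumes fin: "finite B" "span B = (UNIV::'a::real_normed_vector set)"
    and two: "\<forall>Y::'a set. subspace Y \<and> dim Y = 2 \<longrightarrow> approx_smooth Y"
  shows "approx_smooth (UNIV::'a set)"
proof (rule ccontr)
  assume na: "\<not> approx_smooth (UNIV::'a set)"
  have bad: "\<exists>z y::'a. norm z = 1 \<and> norm y \<le> 1 \<and> 2 - 1 / real (Suc n) < norm (z + y) \<and> 2 - 1 / real (Suc n) < norm (z - y)" for n
  proof (rule bad_pairs)
    have "0 \<le> 2 - 1 / real (Suc n)" "2 - 1 / real (Suc n) < 2" by (simp_all add: field_simps)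
    then show "\<not> eps_smooth (UNIV::'a set) (2 - 1 / real (Suc n))" using na unfolding approx_smooth_def by blast
  qed
  define K where "K = sphere (0::'a) 1 \<times> cball (0::'a) 1"
  define phi where "phi p = min (norm (fst p + snd p)) (norm (fst p - snd p))" for p :: "'a \<times> 'a"
  have cK: "compact K"
  proof -
    have "compact (cball (0::'a) 1)" using compact_ball_fd[OF fin] .
    moreover have "sphere (0::'a) 1 = cball 0 1 \<inter> sphere 0 1" by auto
    moreover have "compact (cball (0::'a) 1 \<inter> sphere 0 1)"
    proof (rule compact_Int_closed[OF \<open>compact (cball (0::'a) 1)\<close>])
      have "closed {y::'a. dist 0 y = 1}" by (intro closed_Collect_eq continuous_intros)
      then show "closed (sphere (0::'a) 1)" unfolding sphere_def .
    qed
    ultimately have "compact (sphere (0::'a) 1)" by simp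
    then show ?thesis unfolding K_def using \<open>compact (cball (0::'a) 1)\<close> by (rule compact_Times)
  qed
  obtain z0 y0 :: 'a where "norm z0 = 1" "norm y0 \<le> 1" using bad[of 0] by blast
  then have Kne: "K \<noteq> {}" unfolding K_def by auto
  have cphi: "continuous_on K phi" unfolding phi_def by (intro continuous_intros)
  obtain p where p: "p \<in> K" "\<And>q. q \<in> K \<Longrightarrow> phi q \<le> phi p"
    using continuous_attains_sup[OF cK Kne cphi] by blast
  have ge: "2 - 1 / real (Suc n) < phi p" for n
  proof -
    obtain z y :: 'a where zy: "norm z = 1" "norm y \<le> 1" "2 - 1 / real (Suc n) < norm (z + y)" "2 - 1 / real (Suc n) < norm (z - y)"
      using bad[of n] by blast
    have "(z, y) \<in> K" using zy unfolding K_def by simp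
    then have "phi (z, y) \<le> phi p" by (rule p(2))
    moreover have "2 - 1 / real (Suc n) < phi (z, y)" using zy unfolding phi_def by simp
    ultimately show ?thesis by linarith
  qed
  have ge2: "2 \<le> phi p"
  proof (rule ccontr)
    assume "\<not> 2 \<le> phi p"
    then have "0 < 2 - phi p" by simp
    then obtain n where "inverse (real (Suc n)) < 2 - phi p" using reals_Archimedean by blast
    then show False using ge[of n] by (simp add: inverse_eq_divide)
  qed
  define z where "z = fst p"
  define y where "y = snd p"
  have zy: "norm z = 1" "norm y \<le> 1" using p(1) unfolding K_def z_def y_def by auto
  have zy2: "2 \<le> norm (z + y)" "2 \<le> norm (z - y)" using ge2 unfolding phi_def z_def y_def by auto
  have z0: "z \<noteq> 0" using zy by auto
  have ns: "y \<notin> span {z}" using not_in_span1[OF zy zy2] .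
  define Y where "Y = span {z, y}"
  have Y: "subspace Y" "dim Y = 2" using dim2[OF z0 ns] Y_def by auto
  have zY: "z \<in> Y" "y \<in> Y" unfolding Y_def by (auto intro: span_base)
  obtain e where e: "e < 2" "eps_smooth Y e" using two Y unfolding approx_smooth_def by blast
  have de: "diam_J Y z \<le> e" using e(2) zY zy unfolding eps_smooth_def eps_smooth_point_def by blast
  obtain F where F: "lin1 F" "F (z + y) = norm (z + y)" using norming by blast
  obtain G where G: "lin1 G" "G (z - y) = norm (z - y)" using norming by blast
  have Fb: "F z \<le> 1" "F y \<le> 1" "G z \<le> 1" "- G y \<le> 1"
    using lin1_bd[OF F(1), of z] lin1_bd[OF F(1), of y] lin1_bd[OF G(1), of z] lin1_bd[OF G(1), of y] zy by auto
  have Fv: "F z = 1" "F y = 1" using F zy2 Fb lin1_add[OF F(1), of z y] by auto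
  have Gv: "G z = 1" "G y = -1" using G zy2 Fb lin1_diff[OF G(1), of z y] by auto
  have "F \<in> Jset Y z" "G \<in> Jset Y z" using lin1_J[OF F(1) Y(1) zY(1) zy(1)] lin1_J[OF G(1) Y(1) zY(1) zy(1)] Fv Gv by auto
  then have "dual_norm_on Y (\<lambda>x. F x - G x) \<le> diam_J Y z" using diam_ge[OF Y(1)] by blast
  moreover have "\<bar>F y - G y\<bar> \<le> dual_norm_on Y (\<lambda>x. F x - G x)"
    using dn_ge[OF fun_minus[OF lin1_fun[OF F(1)] lin1_fun[OF G(1)]] zY(2) zy(2)] .
  ultimately show False using de e(1) Fv Gv by simp
qed

theorem theorem2p7:
  fixes X :: "'a::real_normed_vector itself"
  shows "(\<forall>\<epsilon>::real. 0 \<le> \<epsilon> \<and> \<epsilon> < 2 \<longrightarrow>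
            (eps_smooth (UNIV::'a set) \<epsilon> \<longleftrightarrow>
             (\<forall>Y::'a set. subspace Y \<and> dim Y = 2 \<longrightarrow> eps_smooth Y \<epsilon>)))
       \<and> (approx_smooth (UNIV::'a set) \<longrightarrow>
            (\<forall>Y::'a set. subspace Y \<and> dim Y = 2 \<longrightarrow> approx_smooth Y))
       \<and> ((\<exists>B::'a set. finite B \<and> span B = UNIV) \<and>
          (\<forall>Y::'a set. subspace Y \<and> dim Y = 2 \<longrightarrow> approx_smooth Y) \<longrightarrow>
            approx_smooth (UNIV::'a set))"
proof (intro conjI allI impI)
  fix e :: real assume e: "0 \<le> e \<and> e < 2"
  show "eps_smooth (UNIV::'a set) e \<longleftrightarrow> (\<forall>Y::'a set. subspace Y \<and> dim Y = 2 \<longrightarrow> eps_smooth Y e)"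
    using partA[of e] partB[of e] e by blast
next
  fix Y :: "'a set" assume "approx_smooth (UNIV::'a set)" "subspace Y \<and> dim Y = 2"
  then show "approx_smooth Y" using partA unfolding approx_smooth_def by blast
next
  assume "(\<exists>B::'a set. finite B \<and> span B = UNIV) \<and> (\<forall>Y::'a set. subspace Y \<and> dim Y = 2 \<longrightarrow> approx_smooth Y)"
  then show "approx_smooth (UNIV::'a set)" using partC by blast
qed


end
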